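(* Let $\mathbf A$ be a finite subdirectly irreducible cBCK-algebra, let $\mathcal K$ be a cover of $\mathcal V(\mathbf A)$ in the lattice of varieties of cBCK-algebras, and let $\mathbf B$ be a subdirectly irreducible member of $\mathcal K$. Then $\mathrm{h}(\mathbf B)\le \mathrm{h}(\mathbf A)+1$.
   Context: A BCK-algebra is an algebra $(A,\ominus,0)$ of type $(2,0)$ satisfying $((x\ominus y)\ominus(x\ominus z))\ominus(z\ominus y)=0$, $x\ominus 0=x$, $0\ominus x=0$, and ($x\ominus y=0$ and $y\ominus x=0$ imply $x=y$); it is ordered by $x\le y$ iff $x\ominus y=0$. A cBCK-algebra is a BCK-algebra satisfying $x\ominus(x\ominus y)=y\ominus(y\ominus x)$; cBCK-algebras form a variety. For an element $a$, $\mathrm{h}(a)=|[0,a]|-1$ (possibly infinite), and $\mathrm{h}(\mathbf B)=\sup\{\mathrm{h}(b)\mid b\in B\}$. $\mathcal V(\mathbf A)$ is the variety generated by $\mathbf A$. A cover of a variety $\mathcal V$ is a variety $\mathcal K\supsetneq\mathcal V$ such that no variety lies strictly between $\mathcal V$ and $\mathcal K$. *)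

theory Defs
  imports Main "HOL-Library.Extended_Nat"
begin

record 'a alg =
  carrier :: "'a set"
  sub :: "'a \<Rightarrow> 'a \<Rightarrow> 'a"
  zer :: 'a

definition is_cBCK :: "'a alg \<Rightarrow> bool" where
  "is_cBCK A \<longleftrightarrow>
     zer A \<in> carrier A \<and>
     (\<forall>x\<in>carrier A. \<forall>y\<in>carrier A. sub A x y \<in> carrier A) \<and>
     (\<forall>x\<in>carrier A. \<forall>y\<in>carrier A. \<forall>z\<in>carrier A.
        sub A (sub A (sub A x y) (sub A x z)) (sub A z y) = zer A) \<and>
     (\<forall>x\<in>carrier A. sub A x (zer A) = x) \<and>
     (\<forall>x\<in>carrier A. sub A (zer A) x = zer A) \<and>
     (\<forall>x\<in>carrier A. \<forall>y\<in>carrier A.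
        sub A x y = zer A \<longrightarrow> sub A y x = zer A \<longrightarrow> x = y) \<and>
     (\<forall>x\<in>carrier A. \<forall>y\<in>carrier A.
        sub A x (sub A x y) = sub A y (sub A y x))"

datatype trm = Var nat | Zero | Minus trm trm

fun eval :: "'a alg \<Rightarrow> (nat \<Rightarrow> 'a) \<Rightarrow> trm \<Rightarrow> 'a" where
  "eval A \<rho> (Var n) = \<rho> n"
| "eval A \<rho> Zero = zer A"
| "eval A \<rho> (Minus s t) = sub A (eval A \<rho> s) (eval A \<rho> t)"

type_synonym eqn = "trm \<times> trm"

definition sat :: "'a alg \<Rightarrow> eqn \<Rightarrow> bool" where
  "sat A e \<longleftrightarrow> (\<forall>\<rho>. (\<forall>n. \<rho> n \<in> carrier A) \<longrightarrow> eval A \<rho> (fst e) = eval A \<rho> (snd e))"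

definition Id_alg :: "'a alg \<Rightarrow> eqn set" where
  "Id_alg A = {e. sat A e}"

definition Mod_nat :: "eqn set \<Rightarrow> nat alg set" where
  "Mod_nat T = {A. is_cBCK A \<and> (\<forall>e\<in>T. sat A e)}"

definition Id_class :: "'a alg set \<Rightarrow> eqn set" where
  "Id_class C = {e. \<forall>A\<in>C. sat A e}"

text \<open>A variety of cBCK-algebras is represented by its (closed) equational theory T;
  by Birkhoff, a variety is determined by its countable members (its free algebra on
  countably many generators is countable), so closedness can be tested on algebras
  with carrier a subset of nat.\<close>
definition cBCK_variety :: "eqn set \<Rightarrow> bool" where
  "cBCK_variety T \<longleftrightarrow> T = Id_class (Mod_nat T)"

definition in_variety :: "eqn set \<Rightarrow> 'b alg \<Rightarrow> bool" where
  "in_variety T B \<longleftrightarrow> is_cBCK B \<and> (\<forall>e\<in>T. sat B e)"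

text \<open>K (theory T) is a cover of V(A) in the lattice of varieties of cBCK-algebras.
  Inclusion of varieties is reverse inclusion of theories.\<close>
definition is_cover_of_V :: "eqn set \<Rightarrow> 'a alg \<Rightarrow> bool" where
  "is_cover_of_V T A \<longleftrightarrow> cBCK_variety T \<and> T \<subset> Id_alg A \<and>
     (\<forall>T'. cBCK_variety T' \<and> T \<subseteq> T' \<and> T' \<subseteq> Id_alg A \<longrightarrow> T' = T \<or> T' = Id_alg A)"

definition is_congruence :: "'a alg \<Rightarrow> ('a \<times> 'a) set \<Rightarrow> bool" where
  "is_congruence A \<theta> \<longleftrightarrow> equiv (carrier A) \<theta> \<and>
     (\<forall>x y u v. (x,y) \<in> \<theta> \<longrightarrow> (u,v) \<in> \<theta> \<longrightarrow> (sub A x u, sub A y v) \<in> \<theta>)"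

text \<open>Nontrivial with a monolith: some pair of distinct elements lies in every
  congruence other than the identity relation.\<close>
definition subdirectly_irreducible :: "'a alg \<Rightarrow> bool" where
  "subdirectly_irreducible A \<longleftrightarrow>
     (\<exists>a\<in>carrier A. \<exists>b\<in>carrier A. a \<noteq> b \<and>
        (\<forall>\<theta>. is_congruence A \<theta> \<and> \<theta> \<noteq> Id_on (carrier A) \<longrightarrow> (a,b) \<in> \<theta>))"

definition lower_set :: "'a alg \<Rightarrow> 'a \<Rightarrow> 'a set" where
  "lower_set A a = {x \<in> carrier A. sub A x a = zer A}"

definition hgt :: "'a alg \<Rightarrow> 'a \<Rightarrow> enat" where
  "hgt A a = (if finite (lower_set A a) then enat (card (lower_set A a) - 1) else \<infinity>)"

definition hgt_alg :: "'a alg \<Rightarrow> enat" where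
  "hgt_alg A = (SUP b\<in>carrier A. hgt A b)"

end

theory Submission
  imports Defs
begin

locale cbk = fixes C :: "'a set" and s :: "'a \<Rightarrow> 'a \<Rightarrow> 'a" (infixl "\<ominus>" 70) and z :: 'a
assumes cz: "z \<in> C" and cs: "x \<in> C \<Longrightarrow> y \<in> C \<Longrightarrow> x \<ominus> y \<in> C"
and a1: "x \<in> C \<Longrightarrow> y \<in> C \<Longrightarrow> w \<in> C \<Longrightarrow> ((x \<ominus> y) \<ominus> (x \<ominus> w)) \<ominus> (w \<ominus> y) = z"
and a2: "x \<in> C \<Longrightarrow> x \<ominus> z = x" and a3: "x \<in> C \<Longrightarrow> z \<ominus> x = z"
and a4: "x \<in> C \<Longrightarrow> y \<in> C \<Longrightarrow> x \<ominus> y = z \<Longrightarrow> y \<ominus> x = z \<Longrightarrow> x = y"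
and a5: "x \<in> C \<Longrightarrow> y \<in> C \<Longrightarrow> x \<ominus> (x \<ominus> y) = y \<ominus> (y \<ominus> x)"
begin
lemma xx: "x \<in> C \<Longrightarrow> x \<ominus> x = z" using a1[of x z z] by (simp add: a2 cz cs)
lemma l1: "x \<in> C \<Longrightarrow> y \<in> C \<Longrightarrow> (x \<ominus> (x \<ominus> y)) \<ominus> y = z" 
  using a1[of x z y] by (simp add: a2 cz)
lemma tr: "x \<in> C \<Longrightarrow> y \<in> C \<Longrightarrow> w \<in> C \<Longrightarrow> x \<ominus> y = z \<Longrightarrow> y \<ominus> w = z \<Longrightarrow> x \<ominus> w = z"
  using a1[of x w y] by (simp add: a2 cs)
lemma anti: "x \<in> C \<Longrightarrow> y \<in> C \<Longrightarrow> w \<in> C \<Longrightarrow> x \<ominus> y = z \<Longrightarrow> (w \<ominus> y) \<ominus> (w \<ominus> x) = z"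
  using a1[of w y x] by (simp add: a2 cs)
lemma le1: "x \<in> C \<Longrightarrow> y \<in> C \<Longrightarrow>(x \<ominus> y) \<ominus> x = z" 
  using anti[of z y x] by (simp add: a2 a3 cz)
lemma exle: "x \<in> C \<Longrightarrow> y \<in> C \<Longrightarrow> w \<in> C \<Longrightarrow> ((x \<ominus> y) \<ominus> w) \<ominus> ((x \<ominus> w) \<ominus> y) = z"
proof -
  assume C: "x \<in> C" "y \<in> C" "w \<in> C"
  define u where "u = x \<ominus> w"
  have uC: "u \<in> C" using C by (simp add: u_def cs)
  have "(x \<ominus> u) \<ominus> w = z" using l1 C u_def by simp
  hence 1: "((x \<ominus> y) \<ominus> w) \<ominus> ((x \<ominus> y) \<ominus> (x \<ominus> u)) = z" using anti C uC cs by blast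
  have 2: "((x \<ominus> y) \<ominus> (x \<ominus> u)) \<ominus> (u \<ominus> y) = z" using a1 C uC by blast
  show ?thesis using tr[OF _ _ _ 1 2] C uC cs u_def by blast
qed
lemma ex: "x \<in> C \<Longrightarrow> y \<in> C \<Longrightarrow> w \<in> C \<Longrightarrow> (x \<ominus> y) \<ominus> w = (x \<ominus> w) \<ominus> y"
  by (meson a4 cs exle)
lemma lez: "x \<in> C \<Longrightarrow> x \<ominus> z = z \<Longrightarrow> x = z" by (metis a2)
lemma b4: "x \<in> C \<Longrightarrow> y \<in> C \<Longrightarrow> w \<in> C \<Longrightarrow> ((x \<ominus> w) \<ominus> (y \<ominus> w)) \<ominus> (x \<ominus> y) = z"
  by (metis a1 cs ex)
lemma mono1: "x \<in> C \<Longrightarrow> y \<in> C \<Longrightarrow> w \<in> C \<Longrightarrow> x \<ominus> y = z \<Longrightarrow> (x \<ominus> w) \<ominus> (y \<ominus> w) = z"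
  by (metis b4 a2 cs)
lemma comm_le: "x \<in> C \<Longrightarrow> y \<in> C \<Longrightarrow> y \<ominus> x = z \<Longrightarrow> x \<ominus> (x \<ominus> y) = y" by (metis a2 a5)
lemma mle2: "x \<in> C \<Longrightarrow> y \<in> C \<Longrightarrow> (x \<ominus> (x \<ominus> y)) \<ominus> y = z" by (rule l1)
lemma glb: "w \<in> C \<Longrightarrow> x \<in> C \<Longrightarrow> y \<in> C \<Longrightarrow> w \<ominus> x = z \<Longrightarrow> w \<ominus> y = z \<Longrightarrow> w \<ominus> (x \<ominus> (x \<ominus> y)) = z"
  by (metis (lifting) a2 a5 b4 cs)
lemma contra: "x \<in> C \<Longrightarrow> y \<in> C \<Longrightarrow> t \<in> C \<Longrightarrow> x \<ominus> t = z \<Longrightarrow> y \<ominus> t = z \<Longrightarrow> x \<ominus> y = (t \<ominus> y) \<ominus> (t \<ominus> x)"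
  by (metis comm_le ex cs)
lemma hard: "e \<in> C \<Longrightarrow> x \<in> C \<Longrightarrow> y \<in> C \<Longrightarrow> t \<in> C \<Longrightarrow> e \<ominus> (x \<ominus> y) = z \<Longrightarrow> e \<ominus> (y \<ominus> x) = z \<Longrightarrow> x \<ominus> t = z \<Longrightarrow> y \<ominus> t = z \<Longrightarrow> e = z" 
  by (smt (verit) a5 comm_le contra cs ex le1)

definition it :: "'a \<Rightarrow> nat \<Rightarrow> 'a \<Rightarrow> 'a" where "it d n x = ((\<lambda>v. v \<ominus> d) ^^ n) x"
lemma it0[simp]: "it d 0 x = x" by (simp add: it_def)
lemma itS: "it d (Suc n) x = it d n x \<ominus> d" by (simp add: it_def)
lemma itS': "it d (Suc n) x = it d n (x \<ominus> d)" by (simp add: it_def funpow_Suc_right del: funpow.simps)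
lemma it_add: "it d (n + k) x = it d n (it d k x)" by (simp add: it_def funpow_add)
lemma itC: "x \<in> C \<Longrightarrow> d \<in> C \<Longrightarrow> it d n x \<in> C" by (induction n) (auto simp: itS cs)
lemma it_ex: "x \<in> C \<Longrightarrow> d \<in> C \<Longrightarrow> y \<in> C \<Longrightarrow> it d n x \<ominus> y = it d n (x \<ominus> y)"
proof (induction n)
  case (Suc n) thus ?case by (simp add: itS) (metis ex itC cs)
qed simp
lemma it_mono: "x \<in> C \<Longrightarrow> d \<in> C \<Longrightarrow> y \<in> C \<Longrightarrow> x \<ominus> y = z \<Longrightarrow> it d n x \<ominus> it d n y = z"
  by (induction n) (auto simp: itS mono1 itC)
lemma it_le: "x \<in> C \<Longrightarrow> d \<in> C \<Longrightarrow> it d n x \<ominus> x = z"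
proof (induction n)
  case 0 then show ?case by (simp add: xx)
next
  case (Suc n) then show ?case by (metis itS le1 itC tr cs)
qed
lemma it_dec: "x \<in> C \<Longrightarrow> d \<in> C \<Longrightarrow> l \<le> k \<Longrightarrow> it d k x \<ominus> it d l x = z"
  by (metis it_add it_le itC le_add_diff_inverse2)

definition ideal :: "'a set \<Rightarrow> bool" where
  "ideal I \<longleftrightarrow> I \<subseteq> C \<and> z \<in> I \<and> (\<forall>x\<in>C. \<forall>y\<in>I. x \<ominus> y \<in> I \<longrightarrow> x \<in> I)"
lemma ideal_down: "ideal I \<Longrightarrow> y \<in> I \<Longrightarrow> x \<in> C \<Longrightarrow> x \<ominus> y = z \<Longrightarrow> x \<in> I"
  unfolding ideal_def by metis
definition gen :: "'a \<Rightarrow> 'a set" where "gen d = {x \<in> C. \<exists>n. it d n x = z}"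
lemma gen_ideal: assumes "d \<in> C" shows "ideal (gen d)"
  unfolding ideal_def
proof (intro conjI ballI impI)
  show "gen d \<subseteq> C" by (auto simp: gen_def)
  show "z \<in> gen d" using cz by (auto simp: gen_def intro: exI[of _ 0])
  fix x y assume x: "x \<in> C" and y: "y \<in> gen d" and xy: "x \<ominus> y \<in> gen d"
  obtain k where k: "it d k y = z" and yC: "y \<in> C" using y by (auto simp: gen_def)
  obtain n where n: "it d n (x \<ominus> y) = z" using xy by (auto simp: gen_def)
  have "it d n x \<ominus> y = z" using it_ex n x yC assms by simp
  hence "it d k (it d n x) \<ominus> it d k y = z" using it_mono x yC assms itC by blast
  hence "it d (k + n) x = z" using k it_add lez itC x assms by (metis a2)
  thus "x \<in> gen d" using x by (auto simp: gen_def)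
qed
lemma gen_self: "d \<in> C \<Longrightarrow> d \<in> gen d"
  unfolding gen_def by (auto intro!: exI[of _ 1] simp: xx itS)
lemma gen_sub: assumes "ideal J" "d \<in> J" shows "gen d \<subseteq> J"
proof -
  have dC: "d \<in> C" using assms unfolding ideal_def by auto
  have "\<forall>x. x \<in> C \<longrightarrow> it d n x \<in> J \<longrightarrow> x \<in> J" for n
  proof (induction n)
    case 0 then show ?case by simp
  next
    case (Suc n)
    show ?case
    proof (intro allI impI)
      fix x assume x: "x \<in> C" and h: "it d (Suc n) x \<in> J"
      have "x \<ominus> d \<in> J" using Suc h itS' x dC cs by metis
      thus "x \<in> J" using assms x unfolding ideal_def by blast
    qed
  qed
  moreover have "z \<in> J" using assms unfolding ideal_def by auto
  ultimately show ?thesis unfolding gen_def by auto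
qed
definition pol :: "'a \<Rightarrow> 'a set" where "pol c = {x \<in> C. x \<ominus> (x \<ominus> c) = z}"
lemma pol_ideal: assumes cC: "c \<in> C" shows "ideal (pol c)"
  unfolding ideal_def
proof (intro conjI ballI impI)
  show "pol c \<subseteq> C" by (auto simp: pol_def)
  show "z \<in> pol c" using cz cC by (auto simp: pol_def a3 cs)
  fix x a assume x: "x \<in> C" and a: "a \<in> pol c" and xa: "x \<ominus> a \<in> pol c"
  have aC: "a \<in> C" and ac: "a \<ominus> (a \<ominus> c) = z" using a by (auto simp: pol_def)
  have xaC: "x \<ominus> a \<in> C" and xac: "(x \<ominus> a) \<ominus> ((x \<ominus> a) \<ominus> c) = z" using xa by (auto simp: pol_def)
  define e where "e = x \<ominus> (x \<ominus> c)"
  have eC: "e \<in> C" using x cC by (simp add: e_def cs)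
  have ex_: "e \<ominus> x = z" using e_def le1 x cC cs by simp
  have ec: "e \<ominus> c = z" using e_def l1 x cC by simp
  define f where "f = e \<ominus> (e \<ominus> a)"
  have fC: "f \<in> C" using eC aC by (simp add: f_def cs)
  have fe: "f \<ominus> e = z" using f_def le1 eC aC cs by simp
  have fa: "f \<ominus> a = z" using f_def l1 eC aC by simp
  have fc: "f \<ominus> c = z" using tr fC eC cC fe ec by blast
  have "f \<ominus> (c \<ominus> (c \<ominus> a)) = z" using glb fC cC aC fc fa by blast
  hence "f = z" using a5 aC cC ac lez fC by metis
  hence "e \<ominus> (e \<ominus> a) = z" using f_def by simp
  hence "(e \<ominus> a) \<ominus> (x \<ominus> a) = z \<and> e \<ominus> (e \<ominus> a) = z" using mono1 eC x aC ex_ by blast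
  hence "e \<ominus> (x \<ominus> a) = z" using tr eC cs aC x by blast
  hence "e \<ominus> ((x \<ominus> a) \<ominus> ((x \<ominus> a) \<ominus> c)) = z" using glb eC xaC cC ec by blast
  hence "e = z" using xac lez eC by simp
  thus "x \<in> pol c" using x e_def by (simp add: pol_def)
qed

definition cg :: "'a set \<Rightarrow> ('a \<times> 'a) set" where
  "cg I = {(x,y). x \<in> C \<and> y \<in> C \<and> x \<ominus> y \<in> I \<and> y \<ominus> x \<in> I}"
lemma cg_trans: "ideal I \<Longrightarrow> (x,y) \<in> cg I \<Longrightarrow> (y,w) \<in> cg I \<Longrightarrow> (x,w) \<in> cg I"
proof -
  assume I: "ideal I" and h1: "(x,y) \<in> cg I" and h2: "(y,w) \<in> cg I"
  have C3: "x \<in> C" "y \<in> C" "w \<in> C" using h1 h2 by (auto simp: cg_def)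
  have tri: "\<And>p q r. p \<in> C \<Longrightarrow> q \<in> C \<Longrightarrow> r \<in> C \<Longrightarrow> p \<ominus> q \<in> I \<Longrightarrow> q \<ominus> r \<in> I \<Longrightarrow> p \<ominus> r \<in> I"
  proof -
    fix p q r assume pqr: "p \<in> C" "q \<in> C" "r \<in> C" and i1: "p \<ominus> q \<in> I" and i2: "q \<ominus> r \<in> I"
    have h: "((p \<ominus> r) \<ominus> (p \<ominus> q)) \<ominus> (q \<ominus> r) = z" using a1 pqr by blast
    have "(p \<ominus> r) \<ominus> (p \<ominus> q) \<in> I" using ideal_down[OF I i2 _ h] cs pqr by simp
    thus "p \<ominus> r \<in> I" using I i1 pqr cs unfolding ideal_def by blast
  qed
  have "x \<ominus> y \<in> I" "y \<ominus> x \<in> I" "y \<ominus> w \<in> I" "w \<ominus> y \<in> I" using h1 h2 by (auto simp: cg_def)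
  thus ?thesis using tri[of x y w] tri[of w y x] C3 unfolding cg_def by simp
qed
lemma cg_congr: assumes I: "ideal I"
  shows "equiv C (cg I) \<and> (\<forall>x y u v. (x,y) \<in> cg I \<longrightarrow> (u,v) \<in> cg I \<longrightarrow> (x \<ominus> u, y \<ominus> v) \<in> cg I)"
proof (intro conjI allI impI)
  have zI: "z \<in> I" using I unfolding ideal_def by auto
  show "equiv C (cg I)"
  proof (rule equivI)
    show "cg I \<subseteq> C \<times> C" by (auto simp: cg_def)
    show "refl_on C (cg I)" unfolding refl_on_def using zI by (auto simp: cg_def xx)
    show "sym (cg I)" unfolding sym_def by (auto simp: cg_def)
    show "trans (cg I)" unfolding trans_def using cg_trans[OF I] by blast
  qed
  fix x y u v assume xy: "(x,y) \<in> cg I" and uv: "(u,v) \<in> cg I"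
  have C4: "x \<in> C" "y \<in> C" "u \<in> C" "v \<in> C" using xy uv by (auto simp: cg_def)
  have i: "x \<ominus> y \<in> I" "y \<ominus> x \<in> I" "u \<ominus> v \<in> I" "v \<ominus> u \<in> I" using xy uv by (auto simp: cg_def)
  have s1: "(x \<ominus> u, y \<ominus> u) \<in> cg I"
    using ideal_down[OF I i(1), of "(x \<ominus> u) \<ominus> (y \<ominus> u)"] ideal_down[OF I i(2), of "(y \<ominus> u) \<ominus> (x \<ominus> u)"]
      b4 C4 cs by (auto simp: cg_def)
  have s2: "(y \<ominus> u, y \<ominus> v) \<in> cg I"
    using ideal_down[OF I i(4), of "(y \<ominus> u) \<ominus> (y \<ominus> v)"] ideal_down[OF I i(3), of "(y \<ominus> v) \<ominus> (y \<ominus> u)"]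
      a1 C4 cs by (auto simp: cg_def)
  show "(x \<ominus> u, y \<ominus> v) \<in> cg I" using cg_trans[OF I s1 s2] .
qed
lemma cg_nontriv: "a \<in> I \<Longrightarrow> a \<in> C \<Longrightarrow> a \<noteq> z \<Longrightarrow> ideal I \<Longrightarrow> cg I \<noteq> Id_on C"
proof
  assume a: "a \<in> I" "a \<in> C" "a \<noteq> z" "ideal I" "cg I = Id_on C"
  have "(a, z) \<in> cg I" using a cz by (auto simp: cg_def a2 a3 ideal_def)
  thus False using a by auto
qed

lemma chain:
  assumes wC: "w \<in> C" and wz: "w \<noteq> z" and mono: "\<And>I. ideal I \<Longrightarrow> (\<exists>a\<in>I. a \<noteq> z) \<Longrightarrow> w \<in> I"
    and uC: "u \<in> C" and vC: "v \<in> C" and tC: "t \<in> C" and ut: "u \<ominus> t = z" and vt: "v \<ominus> t = z"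
  shows "u \<ominus> v = z \<or> v \<ominus> u = z"
proof (rule ccontr)
  assume "\<not> ?thesis"
  hence d1: "u \<ominus> v \<noteq> z" and d2: "v \<ominus> u \<noteq> z" by auto
  define e where "e = (u \<ominus> v) \<ominus> ((u \<ominus> v) \<ominus> (v \<ominus> u))"
  have eC: "e \<in> C" using uC vC by (simp add: e_def cs)
  have e1: "e \<ominus> (u \<ominus> v) = z" using e_def le1 uC vC cs by simp
  have e2: "e \<ominus> (v \<ominus> u) = z" using e_def l1 uC vC cs by simp
  have "e = z" using hard[OF eC uC vC tC e1 e2 ut vt] .
  hence "u \<ominus> v \<in> pol (v \<ominus> u)" using uC vC cs e_def by (simp add: pol_def)
  hence "gen (u \<ominus> v) \<subseteq> pol (v \<ominus> u)" using gen_sub pol_ideal uC vC cs by blast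
  moreover have "w \<in> gen (u \<ominus> v)" using mono gen_ideal gen_self d1 uC vC cs by blast
  ultimately have "w \<ominus> (w \<ominus> (v \<ominus> u)) = z" unfolding pol_def by blast
  hence "(v \<ominus> u) \<ominus> ((v \<ominus> u) \<ominus> w) = z" using a5 wC uC vC cs by metis
  hence "v \<ominus> u \<in> pol w" using uC vC cs by (simp add: pol_def)
  hence "gen (v \<ominus> u) \<subseteq> pol w" using gen_sub pol_ideal wC by blast
  moreover have "w \<in> gen (v \<ominus> u)" using mono gen_ideal gen_self d2 uC vC cs by blast
  ultimately have "w \<ominus> (w \<ominus> w) = z" unfolding pol_def by blast
  thus False using wz wC by (simp add: xx a2)
qed

lemma heightE:
  assumes n: "\<forall>x\<in>C. finite {v\<in>C. v \<ominus> x = z} \<and> card {v\<in>C. v \<ominus> x = z} \<le> Suc n"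
    and pC: "p \<in> C" and qC: "q \<in> C"
  shows "it q (Suc n) p = it q n p"
proof -
  define L where "L = {v\<in>C. v \<ominus> p = z}"
  have fL: "finite L" and cL: "card L \<le> Suc n" using n pC by (auto simp: L_def)
  have sub: "(\<lambda>k. it q k p) ` {..Suc n} \<subseteq> L" using it_le itC pC qC by (auto simp: L_def)
  have "\<not> inj_on (\<lambda>k. it q k p) {..Suc n}"
  proof
    assume "inj_on (\<lambda>k. it q k p) {..Suc n}"
    hence "card ((\<lambda>k. it q k p) ` {..Suc n}) = Suc (Suc n)" by (simp add: card_image)
    moreover have "card ((\<lambda>k. it q k p) ` {..Suc n}) \<le> card L" using card_mono[OF fL sub] .
    ultimately show False using cL by simp
  qed
  then obtain i j where ij: "i \<le> Suc n" "j \<le> Suc n" "i \<noteq> j" "it q i p = it q j p"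
    unfolding inj_on_def by auto
  obtain i j where ij: "i < j" "j \<le> Suc n" "it q i p = it q j p"
  proof (cases "i < j")
    case True thus ?thesis using ij that by auto
  next
    case False thus ?thesis using ij that[of j i] by auto
  qed
  have s1: "it q (Suc i) p \<ominus> it q i p = z" using it_dec pC qC by simp
  have s2: "it q i p \<ominus> it q (Suc i) p = z" using ij it_dec pC qC by (metis Suc_leI)
  have st: "it q (Suc i) p = it q i p" using a4 s1 s2 itC pC qC by blast
  have stab: "it q (i + k) p = it q i p" for k
  proof (induction k)
    case (Suc k) thus ?case using st by (simp add: itS)
  qed simp
  have "it q (Suc n) p = it q i p" using stab[of "Suc n - i"] ij by simp
  moreover have "it q n p = it q i p" using stab[of "n - i"] ij by simp
  ultimately show ?thesis by simp
qed

lemma choose_y: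
  assumes bC: "b \<in> C"
    and chainb: "\<And>u v. u \<in> C \<Longrightarrow> v \<in> C \<Longrightarrow> u \<ominus> b = z \<Longrightarrow> v \<ominus> b = z \<Longrightarrow> u \<ominus> v = z \<or> v \<ominus> u = z"
    and FL: "F \<subseteq> {v\<in>C. v \<ominus> b = z}" and fF: "finite F" and cF: "card F = Suc (Suc N)"
  shows "\<exists>y\<in>C. y \<noteq> z \<and> y \<ominus> it y N b = z"
proof -
  define L where "L = {v\<in>C. v \<ominus> b = z}"
  have maxex: "\<exists>p\<in>G. \<forall>q\<in>G. q \<ominus> p = z" if "finite G" "G \<noteq> {}" "G \<subseteq> L" for G
    using that
  proof (induction G rule: finite_ne_induct)
    case (singleton x) thus ?case by (auto simp: L_def xx)
  next
    case (insert x G)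
    then obtain p where p: "p \<in> G" "\<forall>q\<in>G. q \<ominus> p = z" by auto
    have xC: "x \<in> C" "x \<ominus> b = z" "p \<in> C" "p \<ominus> b = z" using insert p by (auto simp: L_def)
    show ?case
    proof (cases "x \<ominus> p = z")
      case True thus ?thesis using p by auto
    next
      case False
      hence px: "p \<ominus> x = z" using chainb xC by blast
      have "\<forall>q\<in>insert x G. q \<ominus> x = z"
      proof
        fix q assume q: "q \<in> insert x G"
        show "q \<ominus> x = z"
        proof (cases "q = x")
          case True thus ?thesis using xx xC by simp
        next
          case False hence qG: "q \<in> G" using q by simp
          hence "q \<in> C" "q \<ominus> p = z" using insert.prems p by (auto simp: L_def)
          thus ?thesis using tr[of q p x] px xC by simp
        qed
      qed
      thus ?thesis by auto
    qed
  qed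
  have minex: "\<exists>p\<in>G. \<forall>q\<in>G. p \<ominus> q = z" if "finite G" "G \<noteq> {}" "G \<subseteq> L" for G
    using that
  proof (induction G rule: finite_ne_induct)
    case (singleton x) thus ?case by (auto simp: L_def xx)
  next
    case (insert x G)
    then obtain p where p: "p \<in> G" "\<forall>q\<in>G. p \<ominus> q = z" by auto
    have xC: "x \<in> C" "x \<ominus> b = z" "p \<in> C" "p \<ominus> b = z" using insert p by (auto simp: L_def)
    show ?case
    proof (cases "p \<ominus> x = z")
      case True thus ?thesis using p by auto
    next
      case False
      hence px: "x \<ominus> p = z" using chainb xC by blast
      have "\<forall>q\<in>insert x G. x \<ominus> q = z"
      proof
        fix q assume q: "q \<in> insert x G"
        show "x \<ominus> q = z"
        proof (cases "q = x")
          case True thus ?thesis using xx xC by simp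
        next
          case False hence qG: "q \<in> G" using q by simp
          hence "q \<in> C" "p \<ominus> q = z" using insert.prems p by (auto simp: L_def)
          thus ?thesis using tr[of x p q] px xC by simp
        qed
      qed
      thus ?thesis by auto
    qed
  qed
  define D where "D = (\<lambda>(p,q). p \<ominus> q) ` {(p,q). p \<in> F \<and> q \<in> F \<and> p \<ominus> q \<noteq> z}"
  have fD: "finite D" unfolding D_def
    by (rule finite_imageI, rule finite_subset[of _ "F \<times> F"]) (use fF in auto)
  have DL: "D \<subseteq> L"
  proof
    fix d assume "d \<in> D"
    then obtain p q where d: "d = p \<ominus> q" "p \<in> F" "q \<in> F" unfolding D_def by auto
    have "p \<in> C" "q \<in> C" "p \<ominus> b = z" using d FL by auto
    hence "d \<in> C" "d \<ominus> p = z" using d le1 cs by auto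
    hence "d \<ominus> b = z" using tr[of d p b] \<open>p \<in> C\<close> \<open>p \<ominus> b = z\<close> bC by simp
    thus "d \<in> L" using \<open>d \<in> C\<close> by (simp add: L_def)
  qed
  have memD: "p \<ominus> q \<in> D" if "p \<in> F" "q \<in> F" "p \<ominus> q \<noteq> z" for p q
    using that unfolding D_def by auto
  obtain p0 q0 where pq0: "p0 \<in> F" "q0 \<in> F" "p0 \<noteq> q0"
  proof -
    have "card F \<ge> 2" using cF by simp
    then obtain A where "A \<subseteq> F" "card A = 2" by (meson obtain_subset_with_card_n)
    then obtain p q where "p \<noteq> q" "A = {p,q}" by (meson card_2_iff)
    thus ?thesis using that \<open>A \<subseteq> F\<close> by auto
  qed
  have "D \<noteq> {}"
  proof -
    have C2: "p0 \<in> C" "q0 \<in> C" "p0 \<ominus> b = z" "q0 \<ominus> b = z" using pq0 FL by auto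
    show ?thesis
    proof (cases "p0 \<ominus> q0 = z")
      case True
      hence "q0 \<ominus> p0 \<noteq> z" using a4 C2 pq0 by blast
      thus ?thesis using memD pq0 by blast
    next
      case False thus ?thesis using memD pq0 by blast
    qed
  qed
  then obtain y where yD: "y \<in> D" and ymin: "\<forall>d\<in>D. y \<ominus> d = z" using minex fD DL by blast
  have yC: "y \<in> C" using yD DL by (auto simp: L_def)
  have yz: "y \<noteq> z" using yD unfolding D_def by auto
  have step: "\<exists>G'\<subseteq>F. card G' = k \<and> (\<forall>q\<in>G'. q \<ominus> (w \<ominus> y) = z)"
    if G: "G \<subseteq> F" and wC: "w \<in> C" and Gw: "\<forall>q\<in>G. q \<ominus> w = z" and cG: "card G = Suc k" for G w k
  proof -
    have fG: "finite G" using G fF finite_subset by blast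
    have "G \<noteq> {}" using cG by auto
    moreover have "G \<subseteq> L" using G FL by (auto simp: L_def)
    ultimately obtain p where p: "p \<in> G" "\<forall>q\<in>G. q \<ominus> p = z" using maxex fG by blast
    have pC: "p \<in> C" using p G FL by auto
    have "\<forall>q\<in>G - {p}. q \<ominus> (w \<ominus> y) = z"
    proof
      fix q assume q: "q \<in> G - {p}"
      have qC: "q \<in> C" using q G FL by auto
      have qp: "q \<ominus> p = z" using p q by auto
      have "p \<ominus> q \<noteq> z" using a4 qp pC qC q by blast
      hence "p \<ominus> q \<in> D" using memD p q G by blast
      hence ypq: "y \<ominus> (p \<ominus> q) = z" using ymin by blast
      have h1: "(w \<ominus> (p \<ominus> q)) \<ominus> (w \<ominus> y) = z" using anti[OF yC _ wC ypq] pC qC cs by blast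
      have h2: "(p \<ominus> (p \<ominus> q)) \<ominus> (w \<ominus> (p \<ominus> q)) = z" using mono1 pC wC qC cs Gw p by blast
      have h3: "p \<ominus> (p \<ominus> q) = q" using comm_le pC qC qp by blast
      show "q \<ominus> (w \<ominus> y) = z" using tr h1 h2 h3 qC pC wC yC cs by metis
    qed
    moreover have "card (G - {p}) = k" using cG p fG by simp
    moreover have "G - {p} \<subseteq> F" using G by auto
    ultimately show ?thesis by blast
  qed
  have iter: "\<exists>G\<subseteq>F. card G = Suc (Suc N) - j \<and> (\<forall>q\<in>G. q \<ominus> it y j b = z)" if "j \<le> N" for j
    using that
  proof (induction j)
    case 0 thus ?case using FL cF by auto
  next
    case (Suc j)
    then obtain G where G: "G \<subseteq> F" "card G = Suc (Suc N) - j" "\<forall>q\<in>G. q \<ominus> it y j b = z" by auto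
    have "card G = Suc (Suc (Suc N) - Suc j)" using G Suc by simp
    then obtain G' where "G' \<subseteq> F" "card G' = Suc (Suc N) - Suc j" "\<forall>q\<in>G'. q \<ominus> (it y j b \<ominus> y) = z"
      using step[OF G(1) itC[OF bC yC] G(3)] by blast
    thus ?case by (auto simp: itS)
  qed
  obtain G where G: "G \<subseteq> F" "card G = 2" "\<forall>q\<in>G. q \<ominus> it y N b = z" using iter[of N] by auto
  then obtain p q where pq: "p \<noteq> q" "G = {p,q}" by (meson card_2_iff)
  have C2: "p \<in> C" "q \<in> C" "p \<ominus> b = z" "q \<ominus> b = z" using pq G FL by auto
  have tC: "it y N b \<in> C" using itC bC yC by simp
  have main: "y \<ominus> it y N b = z" if "p' \<in> G" "q' \<in> G" "q' \<ominus> p' = z" "p' \<noteq> q'" for p' q'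
  proof -
    have C2': "p' \<in> C" "q' \<in> C" using that G FL by auto
    have "p' \<ominus> q' \<noteq> z" using a4 that C2' by blast
    hence "y \<ominus> (p' \<ominus> q') = z" using memD ymin that G by blast
    moreover have "(p' \<ominus> q') \<ominus> p' = z" using le1 C2' by simp
    moreover have "p' \<ominus> it y N b = z" using G that by auto
    ultimately show ?thesis using tr C2' tC yC cs by metis
  qed
  have "q \<ominus> p = z \<or> p \<ominus> q = z" using chainb C2 by blast
  thus ?thesis using main pq yC yz by auto
qed

lemma constr:
  assumes bC: "b \<in> C" and yC: "y \<in> C" and yz: "y \<noteq> z" and ya: "y \<ominus> it y (Suc m) b = z"
  defines "a \<equiv> it y (Suc m) b"
  defines "x \<equiv> b \<ominus> a"
  defines "S \<equiv> (\<lambda>j. it y j x) ` {..Suc m}"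
  shows "S \<subseteq> C" "z \<in> S" "x \<in> S" "y \<in> S" "\<forall>p\<in>S. \<forall>q\<in>S. p \<ominus> q \<in> S"
    "it y (Suc m) x = z" "it y m x = y" "it y (Suc (Suc m)) b \<noteq> it y (Suc m) b"
    "finite S" "card S \<le> Suc (Suc m)"
proof -
  have aC: "a \<in> C" using a_def itC bC yC by simp
  have xC: "x \<in> C" using x_def aC bC cs by simp
  define t where "t j = it y j x" for j
  have tC: "t j \<in> C" for j using t_def itC xC yC by simp
  have tb: "t j = it y j b \<ominus> a" for j using it_ex[OF bC yC aC] t_def x_def by simp
  have tN: "t (Suc m) = z" using tb a_def xx aC by simp
  have ym: "y \<ominus> it y m b = z"
    using ya it_dec[OF bC yC, of m "Suc m"] tr yC itC bC a_def by (metis le_SucI order_refl)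
  have tm: "t m = y"
    using tb[of m] a_def itS comm_le[OF itC[OF bC yC] yC ym] by simp
  have tdec: "l \<le> k \<Longrightarrow> t k \<ominus> t l = z" for k l using it_dec xC yC t_def by simp
  have yt: "l \<le> m \<Longrightarrow> y \<ominus> t l = z" for l using tdec[of l m] tm by simp
  have tS: "t j = t (Suc j) \<ominus> y \<or> True" for j by simp
  have clos: "\<forall>a'. a' + j \<le> Suc m \<longrightarrow> t a' \<ominus> t (Suc m - j) = t (a' + j)" for j
  proof (induction j)
    case 0 thus ?case using tN a2 tC by simp
  next
    case (Suc j)
    show ?case
    proof (intro allI impI)
      fix a' assume h: "a' + Suc j \<le> Suc m"
      have e1: "Suc m - j = Suc (m - j)" using h by simp
      define p where "p = t a'"
      define q where "q = t (m - j)"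
      define r where "r = t (Suc (m - j))"
      have pqrC: "p \<in> C" "q \<in> C" "r \<in> C" using tC p_def q_def r_def by auto
      have rq: "r = q \<ominus> y" using r_def q_def t_def itS by simp
      have qp: "q \<ominus> p = z" using tdec h p_def q_def by simp
      have rql: "r \<ominus> q = z" using tdec r_def q_def by simp
      have yq: "y \<ominus> q = z" using yt q_def by simp
      have qr: "q \<ominus> r = y" using rq comm_le[OF _ yC yq] pqrC by simp
      have K3: "(p \<ominus> r) \<ominus> (p \<ominus> q) = q \<ominus> r"
        using ex[of p r "p \<ominus> q"] pqrC comm_le[OF _ _ qp] cs by simp
      have IH: "p \<ominus> r = t (a' + j)" using Suc.IH h e1 p_def r_def by auto
      define D where "D = p \<ominus> q"
      have DC: "D \<in> C" using D_def pqrC cs by simp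
      have eq1: "t (a' + j) \<ominus> D = y" using K3 IH qr D_def by simp
      have DL: "D \<ominus> t (a' + j) = z" using anti[OF _ _ _ rql, of p] pqrC IH D_def by simp
      have "D = t (a' + j) \<ominus> (t (a' + j) \<ominus> D)" using comm_le[OF tC DC DL] by simp
      also have "\<dots> = t (Suc (a' + j))" using eq1 t_def itS by simp
      finally show "t a' \<ominus> t (Suc m - Suc j) = t (a' + Suc j)" using D_def p_def q_def by simp
    qed
  qed
  have Sdef: "S = t ` {..Suc m}" using S_def t_def by simp
  show "S \<subseteq> C" using Sdef tC by auto
  show "z \<in> S" using Sdef tN by force
  show "x \<in> S" using Sdef t_def by force
  show "y \<in> S" using Sdef tm by force
  show "\<forall>p\<in>S. \<forall>q\<in>S. p \<ominus> q \<in> S"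
  proof (intro ballI)
    fix p q assume "p \<in> S" "q \<in> S"
    then obtain i j where ij: "i \<le> Suc m" "j \<le> Suc m" "p = t i" "q = t j" using Sdef by auto
    show "p \<ominus> q \<in> S"
    proof (cases "j \<le> i")
      case True thus ?thesis using tdec ij tN Sdef by force
    next
      case False
      have "t i \<ominus> t (Suc m - (Suc m - j)) = t (i + (Suc m - j))" using clos[of "Suc m - j"] False ij by auto
      moreover have "Suc m - (Suc m - j) = j" using ij by simp
      moreover have "i + (Suc m - j) \<le> Suc m" using False ij by simp
      ultimately show ?thesis using ij Sdef by force
    qed
  qed
  show "it y (Suc m) x = z" using tN t_def by simp
  show "it y m x = y" using tm t_def by simp
  show "it y (Suc (Suc m)) b \<noteq> it y (Suc m) b"
  proof
    assume "it y (Suc (Suc m)) b = it y (Suc m) b"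
    hence "a \<ominus> y = a" using a_def itS by simp
    hence "a \<ominus> (a \<ominus> y) = z" using xx aC by simp
    moreover have "a \<ominus> (a \<ominus> y) = y" using comm_le[OF aC yC] ya a_def by simp
    ultimately show False using yz by simp
  qed
  show "finite S" using Sdef by simp
  show "card S \<le> Suc (Suc m)" using Sdef card_image_le[of "{..Suc m}" t] by simp
qed
end


lemma cbk_of: "is_cBCK A \<Longrightarrow> cbk (carrier A) (sub A) (zer A)"
  unfolding is_cBCK_def cbk_def by blast

fun mt :: "nat \<Rightarrow> trm" where
  "mt 0 = Var 0"
| "mt (Suc k) = Minus (mt k) (Var 1)"

definition En :: "nat \<Rightarrow> eqn" where "En n = (mt (Suc n), mt n)"

lemma eval_mt: "eval A \<rho> (mt k) = ((\<lambda>v. sub A v (\<rho> (Suc 0))) ^^ k) (\<rho> 0)"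
  by (induction k) auto

lemma sat_En: "sat A (En n) \<longleftrightarrow> (\<forall>\<rho>. (\<forall>i. \<rho> i \<in> carrier A) \<longrightarrow>
     sub A (((\<lambda>v. sub A v (\<rho> (Suc 0))) ^^ n) (\<rho> 0)) (\<rho> (Suc 0)) = ((\<lambda>v. sub A v (\<rho> (Suc 0))) ^^ n) (\<rho> 0))"
  unfolding sat_def En_def by (simp add: eval_mt)

lemma sat_En_height:
  assumes A: "is_cBCK A"
    and h: "\<forall>x\<in>carrier A. finite (lower_set A x) \<and> card (lower_set A x) \<le> Suc n"
  shows "sat A (En n)"
proof -
  interpret cbk "carrier A" "sub A" "zer A" using cbk_of[OF A] .
  show ?thesis unfolding sat_En
  proof (intro allI impI)
    fix \<rho> :: "nat \<Rightarrow> 'a" assume r: "\<forall>i. \<rho> i \<in> carrier A"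
    have h': "\<forall>x\<in>carrier A. finite {v\<in>carrier A. sub A v x = zer A} \<and> card {v\<in>carrier A. sub A v x = zer A} \<le> Suc n"
      using h by (simp add: lower_set_def)
    show "sub A (((\<lambda>v. sub A v (\<rho> (Suc 0))) ^^ n) (\<rho> 0)) (\<rho> (Suc 0)) = ((\<lambda>v. sub A v (\<rho> (Suc 0))) ^^ n) (\<rho> 0)"
      using heightE[OF h', of "\<rho> 0" "\<rho> (Suc 0)"] r unfolding it_def by simp
  qed
qed

lemma not_sat_En:
  assumes "p \<in> carrier A" "q \<in> carrier A"
    and "((\<lambda>v. sub A v q) ^^ (Suc n)) p \<noteq> ((\<lambda>v. sub A v q) ^^ n) p"
  shows "\<not> sat A (En n)"
proof -
  define \<rho> where "\<rho> i = (if i = 0 then p else q)" for i :: nat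
  have "\<forall>i. \<rho> i \<in> carrier A" using assms by (simp add: \<rho>_def)
  moreover have "\<rho> 0 = p" "\<rho> (Suc 0) = q" by (auto simp: \<rho>_def)
  ultimately show ?thesis unfolding sat_En using assms(3) by (metis funpow.simps(2) comp_apply)
qed

lemma eval_same: "sub C = sub D \<Longrightarrow> zer C = zer D \<Longrightarrow> eval C \<rho> t = eval D \<rho> t"
  by (induction t) auto

lemma sat_subalg: "carrier C \<subseteq> carrier D \<Longrightarrow> sub C = sub D \<Longrightarrow> zer C = zer D \<Longrightarrow> sat D e \<Longrightarrow> sat C e"
  unfolding sat_def using eval_same by (metis subsetD)

lemma nat_copy:
  fixes D :: "'b alg"
  assumes D: "is_cBCK D" and fin: "finite (carrier D)"
  shows "\<exists>D' :: nat alg. is_cBCK D' \<and> (\<forall>e. sat D' e \<longleftrightarrow> sat D e)"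
proof -
  obtain f :: "'b \<Rightarrow> nat" where f: "inj_on f (carrier D)"
    using finite_imp_inj_to_nat_seg[OF fin] by blast
  define g where "g = the_inv_into (carrier D) f"
  have gf: "x \<in> carrier D \<Longrightarrow> g (f x) = x" for x using f by (simp add: g_def the_inv_into_f_f)
  have fg: "i \<in> f ` carrier D \<Longrightarrow> f (g i) = i" for i using f by (simp add: g_def f_the_inv_into_f)
  have gC: "i \<in> f ` carrier D \<Longrightarrow> g i \<in> carrier D" for i using gf by auto
  define D' where "D' = \<lparr>carrier = f ` carrier D, sub = (\<lambda>i j. f (sub D (g i) (g j))), zer = f (zer D)\<rparr>"
  have cl: "x \<in> carrier D \<Longrightarrow> y \<in> carrier D \<Longrightarrow> sub D x y \<in> carrier D" for x y
    using D unfolding is_cBCK_def by blast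
  have zc: "zer D \<in> carrier D" using D unfolding is_cBCK_def by blast
  have subf: "x \<in> carrier D \<Longrightarrow> y \<in> carrier D \<Longrightarrow> sub D' (f x) (f y) = f (sub D x y)" for x y
    by (simp add: D'_def gf)
  have ev: "(\<forall>i. \<rho> i \<in> f ` carrier D) \<Longrightarrow> eval D' \<rho> t = f (eval D (g \<circ> \<rho>) t) \<and> eval D (g \<circ> \<rho>) t \<in> carrier D" for \<rho> t
  proof (induction t)
    case (Var x) thus ?case using fg gC by auto
  next
    case Zero thus ?case using zc by (simp add: D'_def)
  next
    case (Minus t1 t2) thus ?case using subf cl by simp
  qed
  have satD: "sat D' e \<longleftrightarrow> sat D e" for e
  proof
    assume s: "sat D' e"
    show "sat D e" unfolding sat_def
    proof (intro allI impI)
      fix \<rho> :: "nat \<Rightarrow> 'b" assume r: "\<forall>n. \<rho> n \<in> carrier D"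
      define \<rho>' where "\<rho>' = f \<circ> \<rho>"
      have r': "\<forall>i. \<rho>' i \<in> f ` carrier D" using r by (simp add: \<rho>'_def)
      have gr: "g \<circ> \<rho>' = \<rho>" using r gf by (auto simp: \<rho>'_def)
      have "eval D' \<rho>' (fst e) = eval D' \<rho>' (snd e)" using s r' unfolding sat_def D'_def by simp
      hence "f (eval D \<rho> (fst e)) = f (eval D \<rho> (snd e))" using ev[OF r'] gr by simp
      thus "eval D \<rho> (fst e) = eval D \<rho> (snd e)" using f ev[OF r'] gr inj_onD by metis
    qed
  next
    assume s: "sat D e"
    show "sat D' e" unfolding sat_def
    proof (intro allI impI)
      fix \<rho> :: "nat \<Rightarrow> nat" assume r: "\<forall>n. \<rho> n \<in> carrier D'"
      hence r': "\<forall>i. \<rho> i \<in> f ` carrier D" by (simp add: D'_def)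
      have "\<forall>n. (g \<circ> \<rho>) n \<in> carrier D" using gC r' by simp
      hence "eval D (g \<circ> \<rho>) (fst e) = eval D (g \<circ> \<rho>) (snd e)" using s unfolding sat_def by blast
      thus "eval D' \<rho> (fst e) = eval D' \<rho> (snd e)" using ev[OF r'] by simp
    qed
  qed
  have "is_cBCK D'"
  proof -
    have c: "carrier D' = f ` carrier D" "zer D' = f (zer D)" by (simp_all add: D'_def)
    have injE: "x \<in> carrier D \<Longrightarrow> y \<in> carrier D \<Longrightarrow> f x = f y \<Longrightarrow> x = y" for x y using f inj_onD by metis
    show ?thesis unfolding is_cBCK_def c
    proof (intro conjI)
      show "f (zer D) \<in> f ` carrier D" using zc by simp
      show "\<forall>x\<in>f ` carrier D. \<forall>y\<in>f ` carrier D. sub D' x y \<in> f ` carrier D" using subf cl by auto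
      show "\<forall>x\<in>f ` carrier D. \<forall>y\<in>f ` carrier D. \<forall>z\<in>f ` carrier D.
        sub D' (sub D' (sub D' x y) (sub D' x z)) (sub D' z y) = f (zer D)"
        using subf cl D unfolding is_cBCK_def by auto
      show "\<forall>x\<in>f ` carrier D. sub D' x (f (zer D)) = x"
        using subf cl zc D unfolding is_cBCK_def by auto
      show "\<forall>x\<in>f ` carrier D. sub D' (f (zer D)) x = f (zer D)"
        using subf cl zc D unfolding is_cBCK_def by auto
      show "\<forall>x\<in>f ` carrier D. \<forall>y\<in>f ` carrier D. sub D' x y = f (zer D) \<longrightarrow> sub D' y x = f (zer D) \<longrightarrow> x = y"
      proof (intro ballI impI)
        fix i j assume i: "i \<in> f ` carrier D" and j: "j \<in> f ` carrier D"
          and h1: "sub D' i j = f (zer D)" and h2: "sub D' j i = f (zer D)"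
        obtain x y where xy: "x \<in> carrier D" "y \<in> carrier D" "i = f x" "j = f y" using i j by auto
        have "sub D x y = zer D" using h1 xy subf injE cl zc by metis
        moreover have "sub D y x = zer D" using h2 xy subf injE cl zc by metis
        ultimately have "x = y" using D xy unfolding is_cBCK_def by blast
        thus "i = j" using xy by simp
      qed
      show "\<forall>x\<in>f ` carrier D. \<forall>y\<in>f ` carrier D. sub D' x (sub D' x y) = sub D' y (sub D' y x)"
        using subf cl D unfolding is_cBCK_def by auto
    qed
  qed
  thus ?thesis using satD by blast
qed

lemma closed_var: "cBCK_variety (Id_class (Mod_nat X))"
proof -
  have "Mod_nat (Id_class (Mod_nat X)) = Mod_nat X"
  proof
    show "Mod_nat X \<subseteq> Mod_nat (Id_class (Mod_nat X))" by (auto simp: Mod_nat_def Id_class_def)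
    have "X \<subseteq> Id_class (Mod_nat X)" by (auto simp: Mod_nat_def Id_class_def)
    thus "Mod_nat (Id_class (Mod_nat X)) \<subseteq> Mod_nat X" by (auto simp: Mod_nat_def)
  qed
  thus ?thesis unfolding cBCK_variety_def by simp
qed


theorem mainTheorem6:
  fixes A :: "'a alg" and B :: "'b alg" and T :: "eqn set"
  assumes "is_cBCK A" and "finite (carrier A)" and "subdirectly_irreducible A"
    and "is_cover_of_V T A"
    and "in_variety T B" and "subdirectly_irreducible B"
  shows "hgt_alg B \<le> hgt_alg A + 1"
proof (cases "hgt_alg A = \<infinity>")
  case True thus ?thesis by simp
next
  case False
  then obtain m where hm: "hgt_alg A = enat m" by (cases "hgt_alg A") auto
  have Abound: "\<forall>x\<in>carrier A. finite (lower_set A x) \<and> card (lower_set A x) \<le> Suc m"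
  proof
    fix x assume x: "x \<in> carrier A"
    have "hgt A x \<le> enat m" using hm x unfolding hgt_alg_def by (metis SUP_upper)
    thus "finite (lower_set A x) \<and> card (lower_set A x) \<le> Suc m"
      unfolding hgt_def by (cases "finite (lower_set A x)") auto
  qed
  have Am: "sat A (En m)" using sat_En_height[OF assms(1) Abound] .
  have Am1: "sat A (En (Suc m))" using sat_En_height[OF assms(1)] Abound by (meson le_SucI)
  show ?thesis
  proof (rule ccontr)
    assume nle: "\<not> hgt_alg B \<le> hgt_alg A + 1"
    hence "\<not> hgt_alg B \<le> enat (Suc m)" using hm by (simp add: one_enat_def)
    then obtain b where bB: "b \<in> carrier B" and hb: "\<not> hgt B b \<le> enat (Suc m)"
      unfolding hgt_alg_def by (auto simp: SUP_le_iff)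
    obtain F where F: "F \<subseteq> lower_set B b" "finite F" "card F = Suc (Suc (Suc m))"
    proof (cases "finite (lower_set B b)")
      case True
      hence "card (lower_set B b) \<ge> Suc (Suc (Suc m))" using hb unfolding hgt_def by simp
      thus ?thesis using that obtain_subset_with_card_n True by (metis finite_subset)
    next
      case False
      thus ?thesis using that infinite_arbitrarily_large by blast
    qed
    have Bc: "is_cBCK B" using assms(5) unfolding in_variety_def by blast
    interpret cB: cbk "carrier B" "sub B" "zer B" using cbk_of[OF Bc] .
    obtain p q where pq: "p \<in> carrier B" "q \<in> carrier B" "p \<noteq> q"
      and mon: "\<And>\<theta>. is_congruence B \<theta> \<and> \<theta> \<noteq> Id_on (carrier B) \<Longrightarrow> (p,q) \<in> \<theta>"
      using assms(6) unfolding subdirectly_irreducible_def by blast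
    define w where "w = (if sub B p q \<noteq> zer B then sub B p q else sub B q p)"
    have wC: "w \<in> carrier B" using pq cB.cs w_def by simp
    have wz: "w \<noteq> zer B" using w_def cB.a4 pq by auto
    have wI: "w \<in> I" if I: "cB.ideal I" and ne: "\<exists>a\<in>I. a \<noteq> zer B" for I
    proof -
      obtain a where a: "a \<in> I" "a \<noteq> zer B" using ne by blast
      have aC: "a \<in> carrier B" using a I unfolding cB.ideal_def by blast
      have "is_congruence B (cB.cg I)" unfolding is_congruence_def using cB.cg_congr[OF I] by blast
      moreover have "cB.cg I \<noteq> Id_on (carrier B)" using cB.cg_nontriv a aC I by blast
      ultimately have "(p,q) \<in> cB.cg I" using mon by blast
      hence "sub B p q \<in> I" "sub B q p \<in> I" unfolding cB.cg_def by auto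
      thus ?thesis using w_def by simp
    qed
    have chainb: "sub B u v = zer B \<or> sub B v u = zer B"
      if "u \<in> carrier B" "v \<in> carrier B" "sub B u b = zer B" "sub B v b = zer B" for u v
      using cB.chain[OF wC wz wI that(1,2) bB that(3,4)] by blast
    have FL: "F \<subseteq> {v \<in> carrier B. sub B v b = zer B}" using F unfolding lower_set_def by blast
    obtain y where yC: "y \<in> carrier B" and yz: "y \<noteq> zer B" and ya: "sub B y (cB.it y (Suc m) b) = zer B"
      using cB.choose_y[OF bB chainb FL F(2)] F(3) by blast
    define a where "a = cB.it y (Suc m) b"
    define x where "x = sub B b a"
    define S where "S = (\<lambda>j. cB.it y j x) ` {..Suc m}"
    note cs = cB.constr[OF bB yC yz ya, folded a_def, folded x_def, folded S_def]
    define C where "C = \<lparr>carrier = S, sub = sub B, zer = zer B\<rparr>"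
    have Cc: "is_cBCK C"
    proof -
      have sub: "S \<subseteq> carrier B" using cs(1) .
      show ?thesis using Bc sub cs(2) cs(5) unfolding is_cBCK_def C_def by (simp add: subset_iff)
    qed
    have Cfin: "finite (carrier C)" using cs(9) by (simp add: C_def)
    have CE1: "sat C (En (Suc m))"
    proof (rule sat_En_height[OF Cc], intro ballI conjI)
      fix v assume "v \<in> carrier C"
      have ls: "lower_set C v \<subseteq> S" unfolding lower_set_def C_def by auto
      show "finite (lower_set C v)" using ls cs(9) finite_subset by blast
      show "card (lower_set C v) \<le> Suc (Suc m)" using card_mono[OF cs(9) ls] cs(10) by simp
    qed
    have CE0: "\<not> sat C (En m)"
    proof (rule not_sat_En)
      show "x \<in> carrier C" "y \<in> carrier C" using cs(3,4) by (simp_all add: C_def)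
      show "((\<lambda>v. sub C v y) ^^ Suc m) x \<noteq> ((\<lambda>v. sub C v y) ^^ m) x"
        using cs(6,7) yz unfolding cB.it_def by (simp add: C_def)
    qed
    have BE1: "\<not> sat B (En (Suc m))"
    proof (rule not_sat_En[OF bB yC])
      show "((\<lambda>v. sub B v y) ^^ Suc (Suc m)) b \<noteq> ((\<lambda>v. sub B v y) ^^ Suc m) b"
        using cs(8) a_def unfolding cB.it_def by simp
    qed
    obtain A' :: "nat alg" where A': "is_cBCK A'" "\<forall>e. sat A' e \<longleftrightarrow> sat A e"
      using nat_copy[OF assms(1,2)] by blast
    obtain C' :: "nat alg" where C': "is_cBCK C'" "\<forall>e. sat C' e \<longleftrightarrow> sat C e"
      using nat_copy[OF Cc Cfin] by blast
    have cov: "cBCK_variety T" "T \<subset> Id_alg A"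
      "\<And>T'. cBCK_variety T' \<and> T \<subseteq> T' \<and> T' \<subseteq> Id_alg A \<Longrightarrow> T' = T \<or> T' = Id_alg A"
      using assms(4) unfolding is_cover_of_V_def by blast+
    define T' where "T' = Id_class (Mod_nat (insert (En (Suc m)) T))"
    have v': "cBCK_variety T'" using closed_var T'_def by simp
    have TT': "T \<subseteq> T'"
    proof -
      have "Mod_nat (insert (En (Suc m)) T) \<subseteq> Mod_nat T" by (auto simp: Mod_nat_def)
      hence "Id_class (Mod_nat T) \<subseteq> T'" unfolding T'_def Id_class_def by blast
      thus ?thesis using cov(1) unfolding cBCK_variety_def by simp
    qed
    have A'M: "A' \<in> Mod_nat (insert (En (Suc m)) T)"
    proof -
      have "sat A' (En (Suc m))" using A'(2) Am1 by blast
      moreover have "\<forall>e\<in>T. sat A' e" using A'(2) cov(2) unfolding Id_alg_def by blast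
      ultimately show ?thesis using A'(1) unfolding Mod_nat_def by blast
    qed
    have T'A: "T' \<subseteq> Id_alg A"
    proof
      fix e assume "e \<in> T'"
      hence "sat A' e" using A'M unfolding T'_def Id_class_def by blast
      thus "e \<in> Id_alg A" using A' unfolding Id_alg_def by simp
    qed
    have alt: "T' = T \<or> T' = Id_alg A" using cov(3) v' TT' T'A by blast
    have E1T': "En (Suc m) \<in> T'" unfolding T'_def Id_class_def Mod_nat_def by auto
    have E1T: "En (Suc m) \<notin> T" using BE1 assms(5) unfolding in_variety_def by blast
    have C'M: "C' \<in> Mod_nat (insert (En (Suc m)) T)"
    proof -
      have "\<forall>e\<in>T. sat C e"
      proof
        fix e assume "e \<in> T"
        hence "sat B e" using assms(5) unfolding in_variety_def by blast
        thus "sat C e" using sat_subalg[of C B e] cs(1) by (simp add: C_def)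
      qed
      hence "\<forall>e\<in>T. sat C' e" using C'(2) by blast
      moreover have "sat C' (En (Suc m))" using C'(2) CE1 by blast
      ultimately show ?thesis using C'(1) unfolding Mod_nat_def by blast
    qed
    have E0T': "En m \<notin> T'"
    proof
      assume "En m \<in> T'"
      hence "sat C' (En m)" using C'M unfolding T'_def Id_class_def by blast
      thus False using C' CE0 by simp
    qed
    have E0A: "En m \<in> Id_alg A" using Am unfolding Id_alg_def by simp
    show False using alt E1T' E1T E0T' E0A by blast
  qed
qed

end
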